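(* There exists a family $\mathcal{F}$ of real functions with $|\mathcal{F}| = 2^{\mathfrak{c}}$ such that every $F \in \mathcal{F}$ (viewed as its graph, a subspace of the Euclidean plane $\mathbb{R}^2$) is a connected, dense subset of $\mathbb{R}^2$, and the spaces in $\mathcal{F}$ are incomparable.
   Context: $\mathfrak{c} = 2^{\aleph_0}$. A real function is a function $F:\mathbb{R}\to\mathbb{R}$, identified with its graph $\{(x,F(x)) : x\in\mathbb{R}\}\subset\mathbb{R}^2$ and carrying the subspace topology of the Euclidean plane. Topological spaces $X_i$ ($i\in I$) are called incomparable if, for all $i,j\in I$, whenever $X_i$ is homeomorphic to a subspace $S_j$ of $X_j$, then $i=j$ and $S_j = X_j$; i.e. the spaces are pairwise non-homeomorphic, no one is homeomorphic to a subspace of another, and none is homeomorphic to a proper subspace of itself. *)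

theory Defs
  imports "HOL-Analysis.Analysis" "HOL-Library.Equipollence"
begin

definition graph_of :: "(real \<Rightarrow> real) \<Rightarrow> (real \<times> real) set" where
  "graph_of f = {(x, f x) | x. True}"

definition incomparable_graphs :: "(real \<Rightarrow> real) set \<Rightarrow> bool" where
  "incomparable_graphs \<F> \<longleftrightarrow>
     (\<forall>f\<in>\<F>. \<forall>g\<in>\<F>. \<forall>S. S \<subseteq> graph_of g \<and> graph_of f homeomorphic S
        \<longrightarrow> f = g \<and> S = graph_of g)"

end

theory Submission
  imports Defs
begin


definition small :: "'a set \<Rightarrow> bool" where
  "small S \<longleftrightarrow> ordLess2 (card_of S) (card_of (UNIV::real set))"

lemma inf_real: "infinite (UNIV::real set)"
  by (simp add: infinite_UNIV_char_0)

lemma small_finite: "finite S \<Longrightarrow> small S"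
  unfolding small_def
  using finite_ordLess_infinite[OF card_of_Well_order card_of_Well_order, of S "UNIV::real set"] inf_real by (simp add: Field_card_of)

lemma small_Un: "small A \<Longrightarrow> small B \<Longrightarrow> small (A \<union> B)"
  unfolding small_def by (rule card_of_Un_ordLess_infinite[OF inf_real])

lemma small_subset: "A \<subseteq> B \<Longrightarrow> small B \<Longrightarrow> small A"
  unfolding small_def using card_of_mono1 ordLeq_ordLess_trans by blast

lemma small_image: "small A \<Longrightarrow> small (f ` A)"
  unfolding small_def using card_of_image ordLeq_ordLess_trans by blast

lemma small_inj: "inj_on f A \<Longrightarrow> f ` A \<subseteq> B \<Longrightarrow> small B \<Longrightarrow> small A"
  unfolding small_def
  by (rule ordLeq_ordLess_trans[OF card_of_ordLeqI]) auto

lemma small_Times: "small A \<Longrightarrow> small (A \<times> A)"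
proof (cases "finite A")
  case True then show ?thesis by (simp add: small_finite)
next
  case False
  assume "small A"
  then show ?thesis unfolding small_def
    using card_of_Times_same_infinite[OF False] ordIso_ordLess_trans by blast
qed

lemma not_small_interval:
  fixes a b :: real assumes "a < b" shows "\<not> small {a<..<b}"
proof
  assume "small {a<..<b}"
  moreover have "ordIso2 (card_of {a<..<b}) (card_of (UNIV::real set))"
    using open_interval_eqpoll_reals assms eqpoll_iff_card_of_ordIso by blast
  ultimately have "ordLess2 (card_of (UNIV::real set)) (card_of (UNIV::real set))"
    unfolding small_def using ordIso_ordLess_trans ordIso_symmetric by blast
  then show False using ordLess_irreflexive by blast
qed

lemma exists_notin:
  fixes a b :: real assumes "a < b" "small S" shows "\<exists>x. a < x \<and> x < b \<and> x \<notin> S"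
proof (rule ccontr)
  assume "\<not> ?thesis"
  then have "{a<..<b} \<subseteq> S" by auto
  then show False using small_subset not_small_interval assms by blast
qed

lemma dense_minus_closed:
  fixes C :: "real set"
  assumes "closed C" "interior C = {}" "c < d" 
  shows "{c..d} \<subseteq> closure ({c..d} - C)"
proof
  fix x assume x: "x \<in> {c..d}"
  show "x \<in> closure ({c..d} - C)"
    unfolding closure_approachable
  proof (intro allI impI)
    fix e :: real assume e: "e > 0"
    have "x \<in> closure {c<..<d}" using x closure_greaterThanLessThan[OF assms(3)] by simp
    then obtain y where y: "y \<in> {c<..<d}" "dist y x < e" using e closure_approachable by blast
    define Wb where "Wb = ball x e \<inter> {c<..<d}"
    have "open Wb" by (simp add: Wb_def open_Int)
    have "y \<in> Wb" using y by (simp add: Wb_def dist_commute)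
    have "\<not> Wb \<subseteq> C"
    proof
      assume "Wb \<subseteq> C"
      then have "Wb \<subseteq> interior C" using \<open>open Wb\<close> interior_maximal by blast
      then show False using \<open>y \<in> Wb\<close> assms(2) by blast
    qed
    then obtain w where "w \<in> Wb" "w \<notin> C" by blast
    then show "\<exists>w\<in>{c..d} - C. dist w x < e"
      by (intro bexI[of _ w]) (auto simp: Wb_def dist_commute)
  qed
qed

lemma baire_size:
  fixes \<C> :: "real set set"
  assumes cC: "countable \<C>" and CC: "\<And>C. C \<in> \<C> \<Longrightarrow> closed C \<and> interior C = {}"
    and ab: "a < b" and S: "small S"
  shows "\<exists>x. a < x \<and> x < b \<and> x \<notin> \<Union>\<C> \<and> x \<notin> S"
proof (rule ccontr)
  assume "\<not> ?thesis"
  then have ES: "\<And>x. a < x \<Longrightarrow> x < b \<Longrightarrow> x \<notin> \<Union>\<C> \<Longrightarrow> x \<in> S" by blast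
  define \<epsilon> where "\<epsilon> = (b - a) / 4"
  have \<epsilon>: "\<epsilon> > 0" using ab by (simp add: \<epsilon>_def)
  define I0 where "I0 = {a+\<epsilon>..b-\<epsilon>}"
  have cd: "a + \<epsilon> < b - \<epsilon>" using ab by (simp add: \<epsilon>_def field_simps)
  have sub: "{-\<epsilon><..<\<epsilon>} \<subseteq> (\<lambda>(u,v). u - v) ` (S \<times> S)"
  proof
    fix t assume t: "t \<in> {-\<epsilon><..<\<epsilon>}"
    define \<G> where "\<G> = insert I0 ((\<lambda>C. I0 - C) ` \<C> \<union> (\<lambda>C. I0 - (+) t ` C) ` \<C>)"
    have "countable \<G>" using cC by (simp add: \<G>_def)
    have "I0 \<subseteq> closure (\<Inter>\<G>)"
    proof (rule Baire)
      show "closed I0" by (simp add: I0_def)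
      show "countable \<G>" by fact
      fix T assume "T \<in> \<G>"
      then consider "T = I0" | C where "C \<in> \<C>" "T = I0 - C" | C where "C \<in> \<C>" "T = I0 - (+) t ` C"
        unfolding \<G>_def by blast
      then show "openin (top_of_set I0) T \<and> I0 \<subseteq> closure T"
      proof cases
        case 1 then show ?thesis using closure_subset by auto
      next
        case 2
        have "openin (top_of_set I0) (I0 \<inter> - C)"
          using CC[OF 2(1)] by (intro openin_open_Int) (simp add: open_Compl)
        moreover have "I0 \<subseteq> closure (I0 - C)"
          using CC[OF 2(1)] dense_minus_closed[OF _ _ cd] unfolding I0_def by blast
        ultimately show ?thesis using 2(2) by (simp add: Diff_eq)
      next
        case 3
        have cl: "closed ((+) t ` C)" "interior ((+) t ` C) = {}"
          using CC[OF 3(1)] by (simp_all add: closed_translation interior_translation)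
        have "openin (top_of_set I0) (I0 \<inter> - ((+) t ` C))"
          using cl by (intro openin_open_Int) (simp add: open_Compl)
        moreover have "I0 \<subseteq> closure (I0 - (+) t ` C)"
          using cl dense_minus_closed[OF _ _ cd] unfolding I0_def by blast
        ultimately show ?thesis using 3(2) by (simp add: Diff_eq)
      qed
    qed
    moreover have "I0 \<noteq> {}" using cd by (simp add: I0_def)
    ultimately have "\<Inter>\<G> \<noteq> {}" by (metis closure_empty subset_empty)
    then obtain e where e: "e \<in> \<Inter>\<G>" by blast
    have eI: "e \<in> I0" using e by (simp add: \<G>_def)
    have e1: "e \<notin> \<Union>\<C>" using e eI by (auto simp: \<G>_def)
    have e2: "e - t \<notin> \<Union>\<C>"
    proof
      assume "e - t \<in> \<Union>\<C>"
      then obtain C where "C \<in> \<C>" "e - t \<in> C" by blast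
      then have "e \<in> (+) t ` C" by (auto intro!: image_eqI[of _ _ "e - t"])
      moreover have "I0 - (+) t ` C \<in> \<G>" using \<open>C \<in> \<C>\<close> by (simp add: \<G>_def)
      ultimately show False using e by blast
    qed
    have "e \<in> S" using ES[OF _ _ e1] eI cd \<epsilon> by (auto simp: I0_def)
    moreover have "e - t \<in> S" using ES[OF _ _ e2] eI t \<epsilon> by (auto simp: I0_def)
    ultimately show "t \<in> (\<lambda>(u,v). u - v) ` (S \<times> S)"
      by (intro image_eqI[of _ _ "(e, e - t)"]) auto
  qed
  have "small ((\<lambda>(u,v). u - v) ` (S \<times> S))" by (intro small_image small_Times S)
  then have "small {-\<epsilon><..<\<epsilon>}" using sub small_subset by blast
  then show False using not_small_interval[of "-\<epsilon>" \<epsilon>] \<epsilon> by simp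
qed



definition jones :: "(real \<times> real) set \<Rightarrow> bool" where
  "jones G \<longleftrightarrow> (\<forall>K a b. closed K \<and> K \<inter> G = {} \<and> a < b \<longrightarrow> \<not> {a<..<b} \<subseteq> fst ` K)"

lemma graph_of_iff: "(x,y) \<in> graph_of f \<longleftrightarrow> y = f x"
  by (auto simp: graph_of_def)

lemma dist_horiz: "dist (x::real, y::real) (x', y) = \<bar>x - x'\<bar>"
  by (simp add: dist_Pair_Pair dist_real_def)

lemma jones_dense:
  assumes J: "jones (graph_of f)" shows "closure (graph_of f) = UNIV"
proof -
  have "\<exists>q\<in>graph_of f. dist q p < e" if e: "e > 0" for p :: "real \<times> real" and e :: real
  proof -
    obtain x0 y0 where p: "p = (x0,y0)" by fastforce
    have "{x0 - e/2<..<x0 + e/2} \<subseteq> fst ` cball p (e/2)"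
    proof
      fix x assume x: "x \<in> {x0 - e/2<..<x0 + e/2}"
      have "dist p (x,y0) = \<bar>x0 - x\<bar>" by (simp add: p dist_horiz)
      then have "(x,y0) \<in> cball p (e/2)" using x by (simp add: abs_if)
      then show "x \<in> fst ` cball p (e/2)" by (metis fst_conv image_eqI)
    qed
    moreover have "x0 - e/2 < x0 + e/2" using e by simp
    ultimately have "cball p (e/2) \<inter> graph_of f \<noteq> {}"
      using J[unfolded jones_def, rule_format, of "cball p (e/2)" "x0 - e/2" "x0 + e/2"] by auto
    then obtain q where q: "q \<in> graph_of f" "dist p q \<le> e/2" by auto
    then show ?thesis using e by (intro bexI[of _ q]) (auto simp: dist_commute)
  qed
  then show ?thesis by (auto simp: closure_approachable)
qed

lemma connected_line: "connected ({x} \<times> (UNIV::real set))"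
  by (rule connected_Times) auto

lemma jones_connected:
  assumes J: "jones (graph_of f)" shows "connected (graph_of f)"
proof (rule ccontr)
  let ?G = "graph_of f"
  assume "\<not> connected ?G"
  then have "\<exists>T. (openin (top_of_set ?G) T \<and> closedin (top_of_set ?G) T) \<and> \<not> (T = {} \<or> T = ?G)"
    by (simp only: connected_clopen not_all not_imp)
  then obtain T where To: "openin (top_of_set ?G) T" and Tc: "closedin (top_of_set ?G) T"
    and Tne: "T \<noteq> {}" and TG: "T \<noteq> ?G"
    by (elim exE conjE) simp
  define T' where "T' = ?G - T"
  have TsubG: "T \<subseteq> ?G" using openin_imp_subset[OF To] by simp
  have T'ne: "T' \<noteq> {}" unfolding T'_def using TG TsubG by blast
  have T'c: "closedin (top_of_set ?G) T'"
    unfolding T'_def using closedin_diff[OF closedin_topspace[of "top_of_set ?G"] To] by simp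
  have notcl: "p \<notin> closure A" if "closedin (top_of_set ?G) A" "p \<in> ?G" "p \<notin> A" for p A
  proof -
    from that(1) obtain C where C: "closed C" "A = ?G \<inter> C" by (auto simp: closedin_closed)
    then have cl: "closure A \<subseteq> C" by (simp add: closure_minimal)
    have "p \<notin> C"
    proof
      assume "p \<in> C" then have "p \<in> A" using C(2) that(2) by simp
      then show False using that(3) by simp
    qed
    then show ?thesis using cl by (meson subsetD)
  qed
  define e1 where "e1 = {p. setdist {p} T < setdist {p} T'}"
  define e2 where "e2 = {p. setdist {p} T' < setdist {p} T}"
  have oe1: "open e1" unfolding e1_def by (intro open_Collect_less continuous_on_setdist)
  have oe2: "open e2" unfolding e2_def by (intro open_Collect_less continuous_on_setdist)
  have d12: "e1 \<inter> e2 = {}" by (auto simp: e1_def e2_def)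
  have Te1: "T \<subseteq> e1"
  proof
    fix p assume p: "p \<in> T"
    have "setdist {p} T = 0" using p by (simp add: setdist_eq_0I)
    moreover have "p \<notin> closure T'" by (rule notcl[OF T'c]) (use p TsubG in \<open>auto simp: T'_def\<close>)
    then have "setdist {p} T' \<noteq> 0" using T'ne by (simp add: setdist_eq_0_sing_1)
    moreover have "0 < setdist {p} T'" using setdist_pos_le[of "{p}" T'] calculation(2) by (metis less_eq_real_def)
    ultimately show "p \<in> e1" by (simp add: e1_def)
  qed
  have Te2: "T' \<subseteq> e2"
  proof
    fix p assume p: "p \<in> T'"
    have "setdist {p} T' = 0" using p by (simp add: setdist_eq_0I)
    moreover have "p \<notin> closure T" by (rule notcl[OF Tc]) (use p in \<open>auto simp: T'_def\<close>)
    then have "setdist {p} T \<noteq> 0" using Tne by (simp add: setdist_eq_0_sing_1)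
    moreover have "0 < setdist {p} T" using setdist_pos_le[of "{p}" T] calculation(2) by (metis less_eq_real_def)
    ultimately show "p \<in> e2" by (simp add: e2_def)
  qed
  have Gsub: "?G \<subseteq> e1 \<union> e2" using Te1 Te2 by (auto simp: T'_def)
  define K where "K = - (e1 \<union> e2)"
  have Kc: "closed K" unfolding K_def using oe1 oe2 by (intro closed_Compl open_Un)
  have KG: "K \<inter> ?G = {}" using Gsub by (auto simp: K_def)
  define C where "C = fst ` K"
  have noint: "\<not> {a<..<b} \<subseteq> C" if "a < b" for a b
    using J[unfolded jones_def, rule_format, of K a b] Kc KG that by (simp add: C_def)
  have line: "{x} \<times> UNIV \<subseteq> e1 \<or> {x} \<times> UNIV \<subseteq> e2" if "x \<notin> C" for x
  proof -
    have sub: "{x} \<times> UNIV \<subseteq> e1 \<union> e2"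
    proof
      fix p assume "p \<in> {x} \<times> (UNIV::real set)"
      then have "fst p = x" by auto
      then have "p \<notin> K" using that by (auto simp: C_def)
      then show "p \<in> e1 \<union> e2" by (simp add: K_def)
    qed
    have "e1 \<inter> ({x} \<times> UNIV) = {} \<or> e2 \<inter> ({x} \<times> UNIV) = {}"
      by (rule connectedD[OF connected_line oe1 oe2]) (use d12 sub in auto)
    then show ?thesis using sub by blast
  qed
  define Ob where "Ob E = {x. \<exists>\<delta>>0. \<forall>x'. dist x' x < \<delta> \<and> x' \<notin> C \<longrightarrow> {x'} \<times> (UNIV::real set) \<subseteq> E}" for E
  have near: "x \<in> Ob E" if oE: "open E" and EE: "E = e1 \<and> E' = e2 \<or> E = e2 \<and> E' = e1"
    and xE: "(x, f x) \<in> E" for E E' x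
  proof -
    obtain \<rho> where \<rho>: "\<rho> > 0" "ball (x, f x) \<rho> \<subseteq> E" using oE xE open_contains_ball by blast
    have "{x'} \<times> UNIV \<subseteq> E" if x': "dist x' x < \<rho>" "x' \<notin> C" for x'
    proof -
      have "dist (x, f x) (x', f x) < \<rho>" using x' by (simp add: dist_horiz dist_real_def abs_minus_commute)
      then have "(x', f x) \<in> E" using \<rho>(2) by auto
      moreover have "(x', f x) \<notin> E'" using calculation d12 EE by auto
      ultimately show ?thesis using line[OF x'(2)] EE by auto
    qed
    then show ?thesis using \<rho>(1) unfolding Ob_def by blast
  qed
  have openO: "open (Ob E)" for E
    unfolding open_dist
  proof (intro ballI)
    fix x assume "x \<in> Ob E"
    then obtain \<delta> where \<delta>: "\<delta> > 0" "\<And>x'. dist x' x < \<delta> \<Longrightarrow> x' \<notin> C \<Longrightarrow> {x'} \<times> UNIV \<subseteq> E"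
      by (auto simp: Ob_def)
    show "\<exists>e>0. \<forall>y. dist y x < e \<longrightarrow> y \<in> Ob E"
    proof (intro exI[of _ "\<delta>/2"] conjI allI impI)
      fix y assume y: "dist y x < \<delta>/2"
      have "\<forall>x'. dist x' y < \<delta>/2 \<and> x' \<notin> C \<longrightarrow> {x'} \<times> UNIV \<subseteq> E"
      proof (intro allI impI)
        fix x' assume x': "dist x' y < \<delta>/2 \<and> x' \<notin> C"
        have "dist x' x \<le> dist x' y + dist y x" by (rule dist_triangle)
        then have "dist x' x < \<delta>" using x' y by linarith
        then show "{x'} \<times> UNIV \<subseteq> E" using \<delta>(2) x' by blast
      qed
      moreover have "\<delta>/2 > 0" using \<delta>(1) by simp
      ultimately show "y \<in> Ob E" unfolding Ob_def by blast
    qed (use \<delta> in simp)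
  qed
  have cover: "UNIV \<subseteq> Ob e1 \<union> Ob e2"
  proof
    fix x :: real
    have "(x, f x) \<in> ?G" by (simp add: graph_of_iff)
    then have "(x, f x) \<in> e1 \<or> (x, f x) \<in> e2" using Gsub by auto
    then show "x \<in> Ob e1 \<union> Ob e2" using near[of e1 e2 x] near[of e2 e1 x] oe1 oe2 by auto
  qed
  have disj: "Ob e1 \<inter> Ob e2 \<inter> UNIV = {}"
  proof (rule ccontr)
    assume "Ob e1 \<inter> Ob e2 \<inter> UNIV \<noteq> {}"
    then obtain x \<delta>1 \<delta>2 where d1: "\<delta>1 > 0" "\<And>x'. dist x' x < \<delta>1 \<and> x' \<notin> C \<Longrightarrow> {x'} \<times> UNIV \<subseteq> e1"
      and d2: "\<delta>2 > 0" "\<And>x'. dist x' x < \<delta>2 \<and> x' \<notin> C \<Longrightarrow> {x'} \<times> UNIV \<subseteq> e2"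
      unfolding Ob_def by blast
    define \<delta> where "\<delta> = min \<delta>1 \<delta>2"
    have "\<delta> > 0" using d1 d2 by (simp add: \<delta>_def)
    then have "x - \<delta> < x + \<delta>" by simp
    then obtain x' where x': "x' \<in> {x - \<delta><..<x + \<delta>}" "x' \<notin> C" using noint by blast
    then have "dist x' x < \<delta>" by (auto simp: dist_real_def)
    then have "dist x' x < \<delta>1" "dist x' x < \<delta>2" by (auto simp: \<delta>_def)
    then have "{x'} \<times> UNIV \<subseteq> e1" "{x'} \<times> UNIV \<subseteq> e2" using d1(2)[of x'] d2(2)[of x'] x'(2) by auto
    then have "(x', 0) \<in> e1" "(x', 0) \<in> e2" by auto
    then show False using d12 by auto
  qed
  obtain p1 where "p1 \<in> T" using Tne by blast
  then obtain x1 where "p1 = (x1, f x1)" using TsubG by (auto simp: graph_of_def)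
  then have "(x1, f x1) \<in> e1" using Te1 \<open>p1 \<in> T\<close> by auto
  then have "x1 \<in> Ob e1" using near[of e1 e2 x1] oe1 by auto
  obtain p2 where "p2 \<in> T'" using T'ne by blast
  then obtain x2 where "p2 = (x2, f x2)" by (auto simp: graph_of_def T'_def)
  then have "(x2, f x2) \<in> e2" using Te2 \<open>p2 \<in> T'\<close> by auto
  then have "x2 \<in> Ob e2" using near[of e2 e1 x2] oe2 by auto
  have "Ob e1 \<inter> UNIV = {} \<or> Ob e2 \<inter> UNIV = {}"
    by (rule connectedD[OF connected_UNIV openO openO disj cover])
  then show False using \<open>x1 \<in> Ob e1\<close> \<open>x2 \<in> Ob e2\<close> by auto
qed



lemma proj_compact_closed:
  fixes K :: "(real \<times> real) set"
  assumes "closed K"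
  shows "closed (fst ` (K \<inter> ({a..b} \<times> {c..d})))"
proof -
  have "compact (K \<inter> ({a..b} \<times> {c..d}))"
    using assms by (intro closed_Int_compact compact_Times compact_Icc)
  then have "compact (fst ` (K \<inter> ({a..b} \<times> {c..d})))"
    by (rule compact_continuous_image[OF continuous_on_fst[OF continuous_on_id]])
  then show ?thesis by (rule compact_imp_closed)
qed

lemma interior_empty_jones:
  assumes J: "jones G" and K: "closed K" "K \<inter> G = {}" and sub: "C \<subseteq> fst ` K"
  shows "interior C = {}"
proof (rule ccontr)
  assume "interior C \<noteq> {}"
  then obtain x where "x \<in> interior C" by blast
  then obtain e where e: "e > 0" "ball x e \<subseteq> C" by (auto simp: mem_interior)
  have "{x - e<..<x + e} \<subseteq> ball x e" by (auto simp: dist_real_def)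
  then have "{x - e<..<x+e} \<subseteq> fst ` K" using e sub by blast
  moreover have "x - e < x + e" using e by simp
  ultimately show False using J[unfolded jones_def, rule_format, of K "x-e" "x+e"] K by blast
qed

lemma many_lines:
  fixes \<U> :: "(real \<times> real) set set"
  assumes J: "jones G" and cU: "countable \<U>" and oU: "\<And>U. U \<in> \<U> \<Longrightarrow> open U" and GA: "G \<subseteq> \<Inter>\<U>"
    and ab: "a < b" and cd: "c < d" and Sm: "small Sm"
  shows "\<exists>x. a < x \<and> x < b \<and> x \<notin> Sm \<and> (\<forall>y. c < y \<and> y < d \<longrightarrow> (x,y) \<in> \<Inter>\<U>)"
proof -
  define ck where "ck k = c + (d - c) / (real k + 3)" for k :: nat
  define dk where "dk k = d - (d - c) / (real k + 3)" for k :: nat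
  define Cf where "Cf U k = fst ` ((- U) \<inter> ({a..b} \<times> {ck k..dk k}))" for U k
  define \<C> where "\<C> = (\<lambda>(U,k). Cf U k) ` (\<U> \<times> (UNIV::nat set))"
  have "countable \<C>" unfolding \<C>_def using cU by (intro countable_image countable_SIGMA) auto
  have CC: "closed C \<and> interior C = {}" if "C \<in> \<C>" for C
  proof -
    from that obtain P where P: "P \<in> \<U> \<times> (UNIV::nat set)" "C = (\<lambda>(U,k). Cf U k) P"
      unfolding \<C>_def by (rule imageE)
    obtain U k where "P = (U, k)" by fastforce
    then have U: "U \<in> \<U>" and C: "C = Cf U k" using P by auto
    have cU': "closed (- U)" using oU[OF U] by (simp add: closed_Compl)
    then have cl: "closed C" unfolding C Cf_def by (rule proj_compact_closed)
    have "(- U \<inter> ({a..b} \<times> {ck k..dk k})) \<inter> G = {}" using GA U by blast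
    moreover have "closed (- U \<inter> ({a..b} \<times> {ck k..dk k}))" using cU' by (intro closed_Int closed_Times) auto
    ultimately have "interior C = {}" by (intro interior_empty_jones[OF J]) (auto simp: C Cf_def)
    with cl show ?thesis by simp
  qed
  obtain x where x: "a < x" "x < b" "x \<notin> \<Union>\<C>" "x \<notin> Sm"
    using baire_size[OF \<open>countable \<C>\<close> CC ab Sm] by blast
  have "(x,y) \<in> \<Inter>\<U>" if y: "c < y" "y < d" for y
  proof (rule ccontr)
    assume "(x,y) \<notin> \<Inter>\<U>"
    then obtain U where U: "U \<in> \<U>" "(x,y) \<notin> U" by blast
    define m where "m = min (y - c) (d - y)"
    have m: "m > 0" using y by (simp add: m_def)
    obtain k :: nat where k: "(d - c) / m < real k" using reals_Archimedean2 by blast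
    have "(d - c) / (real k + 3) \<le> m"
    proof -
      have "d - c < m * real k" using k m by (simp add: field_simps)
      also have "\<dots> \<le> m * (real k + 3)" using m by simp
      finally show ?thesis using m by (simp add: field_simps)
    qed
    then have "ck k \<le> y" "y \<le> dk k" unfolding ck_def dk_def m_def by auto
    then have "(x,y) \<in> (- U) \<inter> ({a..b} \<times> {ck k..dk k})" using U x by auto
    then have "x \<in> Cf U k" unfolding Cf_def by (metis fst_conv image_eqI)
    moreover have "Cf U k \<in> \<C>" using U unfolding \<C>_def by auto
    ultimately show False using x(3) by blast
  qed
  then show ?thesis using x by blast
qed


type_synonym pt = "real \<times> real"
type_synonym tgt = "pt set + (pt \<times> pt) set"

lemma closed_code:
  fixes K :: "'a::second_countable_topology set"
  assumes tB: "topological_basis \<B>" and K: "closed K"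
  shows "K = - \<Union>{B\<in>\<B>. B \<inter> K = {}}"
proof -
  have "open (- K)" using K by (simp add: open_Compl)
  then obtain B' where B': "B' \<subseteq> \<B>" "\<Union>B' = - K" using tB unfolding topological_basis_def by blast
  have "- K \<subseteq> \<Union>{B\<in>\<B>. B \<inter> K = {}}"
  proof
    fix x assume "x \<in> - K"
    then obtain B where "B \<in> B'" "x \<in> B" using B'(2) by blast
    moreover have "B \<inter> K = {}" using \<open>B \<in> B'\<close> B'(2) by blast
    ultimately show "x \<in> \<Union>{B\<in>\<B>. B \<inter> K = {}}" using B'(1) by blast
  qed
  moreover have "\<Union>{B\<in>\<B>. B \<inter> K = {}} \<subseteq> - K" by blast
  ultimately show ?thesis by blast
qed

lemma closed_sets_lepoll:
  "{K::'a::second_countable_topology set. closed K} \<lesssim> (UNIV :: nat set set)"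
proof -
  obtain \<B> :: "'a set set" where cB: "countable \<B>" and tB: "topological_basis \<B>"
    using ex_countable_basis by blast
  define enc where "enc K = to_nat_on \<B> ` {B\<in>\<B>. B \<inter> K = {}}" for K :: "'a set"
  have "inj_on enc {K. closed K}"
  proof (rule inj_onI)
    fix K1 K2 assume K1: "K1 \<in> {K. closed K}" and K2: "K2 \<in> {K. closed K}" and e: "enc K1 = enc K2"
    have s1: "{B\<in>\<B>. B \<inter> K1 = {}} \<subseteq> \<B>" and s2: "{B\<in>\<B>. B \<inter> K2 = {}} \<subseteq> \<B>" by auto
    have eq: "{B\<in>\<B>. B \<inter> K1 = {}} = {B\<in>\<B>. B \<inter> K2 = {}}"
      using e inj_on_image_eq_iff[OF inj_on_to_nat_on[OF cB] s1 s2] unfolding enc_def by simp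
    have "K1 = - \<Union>{B\<in>\<B>. B \<inter> K1 = {}}" using closed_code[OF tB] K1 by simp
    also have "\<dots> = - \<Union>{B\<in>\<B>. B \<inter> K2 = {}}" by (simp only: eq)
    also have "\<dots> = K2" using closed_code[OF tB] K2 by simp
    finally show "K1 = K2" .
  qed
  then show ?thesis unfolding lepoll_def by (intro exI[of _ enc]) simp
qed

definition codes :: "tgt set" where
  "codes = {K. closed K} <+> {\<Gamma>. closed \<Gamma>}"

lemma codes_lepoll_nat: "codes \<lesssim> (UNIV :: nat set set)"
proof -
  obtain e1 :: "pt set \<Rightarrow> nat set" where e1: "inj_on e1 {K. closed K}"
    using closed_sets_lepoll unfolding lepoll_def by blast
  obtain e2 :: "(pt \<times> pt) set \<Rightarrow> nat set" where e2: "inj_on e2 {K. closed K}"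
    using closed_sets_lepoll unfolding lepoll_def by blast
  define ev where "ev n = 2 * n + 2" for n :: nat
  define od where "od n = 2 * n + 1" for n :: nat
  have iev: "inj ev" by (auto simp: ev_def inj_def)
  have iod: "inj od" by (auto simp: od_def inj_def)
  define enc where "enc c = (case c of Inl K \<Rightarrow> insert 0 (ev ` e1 K) | Inr \<Gamma> \<Rightarrow> od ` e2 \<Gamma>)" for c :: tgt
  have "inj_on enc codes"
  proof (rule inj_onI)
    fix c1 c2 assume c1: "c1 \<in> codes" and c2: "c2 \<in> codes" and eq: "enc c1 = enc c2"
    have z: "0 \<notin> od ` A" for A by (auto simp: od_def)
    have evne: "0 \<notin> ev ` A" for A by (auto simp: ev_def)
    show "c1 = c2"
    proof (cases c1)
      case (Inl K1) note c1' = this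
      then have K1: "closed K1" using c1 by (auto simp: codes_def)
      show ?thesis
      proof (cases c2)
        case (Inl K2)
        then have K2: "closed K2" using c2 by (auto simp: codes_def)
        have "insert 0 (ev ` e1 K1) = insert 0 (ev ` e1 K2)" using eq c1' Inl by (simp add: enc_def)
        then have "ev ` e1 K1 = ev ` e1 K2" using evne by (metis Diff_insert_absorb)
        then have "e1 K1 = e1 K2" using iev by (simp add: inj_image_eq_iff)
        then show ?thesis using e1 K1 K2 c1' Inl by (simp add: inj_on_def)
      next
        case (Inr G2)
        have "insert 0 (ev ` e1 K1) = od ` e2 G2" using eq c1' Inr by (simp add: enc_def)
        then have "0 \<in> od ` e2 G2" by (metis insertI1)
        then show ?thesis using z by blast
      qed
    next
      case (Inr G1) note c1' = this
      then have G1: "closed G1" using c1 by (auto simp: codes_def)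
      show ?thesis
      proof (cases c2)
        case (Inl K2)
        have "insert 0 (ev ` e1 K2) = od ` e2 G1" using eq c1' Inl by (simp add: enc_def)
        then have "0 \<in> od ` e2 G1" by (metis insertI1)
        then show ?thesis using z by blast
      next
        case (Inr G2)
        then have G2: "closed G2" using c2 by (auto simp: codes_def)
        have "od ` e2 G1 = od ` e2 G2" using eq c1' Inr by (simp add: enc_def)
        then have "e2 G1 = e2 G2" using iod by (simp add: inj_image_eq_iff)
        then show ?thesis using e2 G1 G2 c1' Inr by (simp add: inj_on_def)
      qed
    qed
  qed
  then show ?thesis unfolding lepoll_def by blast
qed

lemma codes_lepoll_real: "codes \<lesssim> (UNIV :: real set)"
  using codes_lepoll_nat nat_sets_eqpoll_reals by (rule lepoll_trans2)

definition tau :: "real \<Rightarrow> tgt" where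
  "tau = (SOME g. codes \<subseteq> range g)"

lemma tau_surj: "codes \<subseteq> range tau"
proof -
  have "\<exists>g. codes \<subseteq> g ` (UNIV::real set)" using codes_lepoll_real by (simp only: lepoll_iff)
  then show ?thesis unfolding tau_def by (rule someI_ex)
qed

lemma tau_Inl: "closed K \<Longrightarrow> \<exists>\<alpha>. tau \<alpha> = Inl K"
  using tau_surj by (force simp: codes_def)

lemma tau_Inr: "closed \<Gamma> \<Longrightarrow> \<exists>\<alpha>. tau \<alpha> = Inr \<Gamma>"
  using tau_surj by (force simp: codes_def)



type_synonym stg = "(pt \<times> pt) \<times> real"

abbreviation RR :: "real rel" where "RR \<equiv> card_of (UNIV::real set)"

definition pts :: "stg \<Rightarrow> pt set" where "pts s = {fst (fst s), snd (fst s)}"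

definition usedS :: "(real \<Rightarrow> stg) \<Rightarrow> real \<Rightarrow> real set" where
  "usedS S \<alpha> = (\<Union>\<beta>\<in>underS RR \<alpha>. fst ` pts (S \<beta>) \<union> {snd (S \<beta>)})"
definition oldP :: "(real \<Rightarrow> stg) \<Rightarrow> real \<Rightarrow> pt set" where
  "oldP S \<alpha> = (\<Union>\<beta>\<in>underS RR \<alpha>. pts (S \<beta>))"
definition oldZ :: "(real \<Rightarrow> stg) \<Rightarrow> real \<Rightarrow> real set" where
  "oldZ S \<alpha> = (\<lambda>\<beta>. snd (S \<beta>)) ` underS RR \<alpha>"

definition valid :: "(real \<Rightarrow> stg) \<Rightarrow> real \<Rightarrow> stg \<Rightarrow> bool" where
  "valid S \<alpha> s \<longleftrightarrow> (\<forall>p\<in>pts s. fst p \<notin> usedS S \<alpha>) \<and>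
     (fst (fst (fst s)) = fst (snd (fst s)) \<longrightarrow> fst (fst s) = snd (fst s)) \<and>
     snd s \<notin> usedS S \<alpha> \<and> snd s \<notin> fst ` pts s"

definition decodeH :: "(pt \<times> pt) set \<Rightarrow> pt \<Rightarrow> pt" where
  "decodeH \<Gamma> p = (SOME q. (p,q) \<in> \<Gamma>)"

definition killed :: "(pt \<Rightarrow> pt) \<Rightarrow> (real \<Rightarrow> stg) \<Rightarrow> real \<Rightarrow> stg \<Rightarrow> bool" where
  "killed h S \<alpha> s \<longleftrightarrow> (\<exists>p\<in>pts s. \<exists>q\<in>pts s. fst p \<noteq> fst q \<and> h p = h q) \<or>
    (\<exists>p\<in>pts s. fst (h p) \<in> fst ` (oldP S \<alpha> \<union> pts s) \<union> oldZ S \<alpha> \<and>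
                h p \<notin> oldP S \<alpha> \<union> pts s \<union> oldZ S \<alpha> \<times> {0,1})"

definition good :: "tgt \<Rightarrow> (real \<Rightarrow> stg) \<Rightarrow> real \<Rightarrow> stg \<Rightarrow> bool" where
  "good t S \<alpha> s = (case t of Inl K \<Rightarrow> pts s \<inter> K \<noteq> {} | Inr \<Gamma> \<Rightarrow> killed (decodeH \<Gamma>) S \<alpha> s)"

definition stepF :: "(real \<Rightarrow> stg) \<Rightarrow> real \<Rightarrow> stg" where
  "stepF S \<alpha> = (SOME s. valid S \<alpha> s \<and> ((\<exists>s'. valid S \<alpha> s' \<and> good (tau \<alpha>) S \<alpha> s') \<longrightarrow> good (tau \<alpha>) S \<alpha> s))"

definition Sq :: "real \<Rightarrow> stg" where "Sq = wfrec (RR - Id) stepF"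

lemma small_underS: "small (underS RR \<alpha>)"
  unfolding small_def using card_of_underS[OF card_of_Card_order, of \<alpha> "UNIV::real set"]
  by (simp add: Field_card_of)

lemma oldP_eq': "oldP S \<alpha> = (\<lambda>\<beta>. fst (fst (S \<beta>))) ` underS RR \<alpha> \<union> (\<lambda>\<beta>. snd (fst (S \<beta>))) ` underS RR \<alpha>"
  unfolding oldP_def pts_def by blast

lemma small_oldP: "small (oldP S \<alpha>)"
  unfolding oldP_eq' by (intro small_Un small_image small_underS)

lemma small_oldZ: "small (oldZ S \<alpha>)"
  unfolding oldZ_def by (intro small_image small_underS)

lemma usedS_eq: "usedS S \<alpha> = fst ` oldP S \<alpha> \<union> oldZ S \<alpha>"
  unfolding usedS_def oldP_def oldZ_def by blast

lemma small_usedS: "small (usedS S \<alpha>)"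
  unfolding usedS_eq by (intro small_Un small_image small_oldP small_oldZ)

lemma small_oldZ01: "small (oldZ S \<alpha> \<times> {0::real,1})"
proof -
  have "oldZ S \<alpha> \<times> {0::real,1} = (\<lambda>z. (z,0)) ` oldZ S \<alpha> \<union> (\<lambda>z. (z,1)) ` oldZ S \<alpha>" by auto
  then show ?thesis by (simp add: small_Un small_image small_oldZ)
qed

lemma cong_underS:
  assumes "\<And>\<beta>. \<beta> \<in> underS RR \<alpha> \<Longrightarrow> S \<beta> = S' \<beta>"
  shows "usedS S \<alpha> = usedS S' \<alpha>" "oldP S \<alpha> = oldP S' \<alpha>" "oldZ S \<alpha> = oldZ S' \<alpha>"
  using assms unfolding usedS_def oldP_def oldZ_def by (auto simp: image_def)

lemma adm: "adm_wf (RR - Id) stepF"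
  unfolding adm_wf_def
proof (intro allI impI)
  fix f g :: "real \<Rightarrow> stg" and x
  assume "\<forall>z. (z, x) \<in> RR - Id \<longrightarrow> f z = g z"
  then have fg: "\<And>\<beta>. \<beta> \<in> underS RR x \<Longrightarrow> f \<beta> = g \<beta>" by (auto simp: underS_def)
  have v: "valid f x = valid g x" unfolding valid_def[abs_def] using cong_underS[OF fg] by simp
  have k: "killed h f x = killed h g x" for h unfolding killed_def[abs_def] using cong_underS[OF fg] by simp
  have gd: "good t f x = good t g x" for t unfolding good_def[abs_def] using k by (simp split: sum.splits)
  show "stepF f x = stepF g x" unfolding stepF_def v gd ..
qed

lemma Sq_eq: "Sq \<alpha> = stepF Sq \<alpha>"
proof -
  have "wf (RR - Id)" using card_of_Well_order unfolding well_order_on_def by blast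
  then show ?thesis unfolding Sq_def using wfrec_fixpoint[OF _ adm] by metis
qed

lemma exists_fresh2: "small S \<Longrightarrow> \<exists>z::real. z \<notin> S"
  using exists_notin[of 0 1 S] by auto

lemma exists_valid: "\<exists>s. valid S \<alpha> s"
proof -
  obtain x where x: "x \<notin> usedS S \<alpha>" using exists_fresh2 small_usedS by blast
  obtain z where z: "z \<notin> usedS S \<alpha> \<union> {x}" using exists_fresh2 small_usedS small_finite small_Un
    by (metis finite.emptyI finite_insert)
  have "valid S \<alpha> (((x,0),(x,0)),z)" using x z by (simp add: valid_def pts_def)
  then show ?thesis by blast
qed

lemma Sq_valid: "valid Sq \<alpha> (Sq \<alpha>)"
  and Sq_good: "(\<exists>s'. valid Sq \<alpha> s' \<and> good (tau \<alpha>) Sq \<alpha> s') \<Longrightarrow> good (tau \<alpha>) Sq \<alpha> (Sq \<alpha>)"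
proof -
  have ex: "\<exists>s. valid Sq \<alpha> s \<and> ((\<exists>s'. valid Sq \<alpha> s' \<and> good (tau \<alpha>) Sq \<alpha> s') \<longrightarrow> good (tau \<alpha>) Sq \<alpha> s)"
    using exists_valid by blast
  have "valid Sq \<alpha> (Sq \<alpha>) \<and> ((\<exists>s'. valid Sq \<alpha> s' \<and> good (tau \<alpha>) Sq \<alpha> s') \<longrightarrow> good (tau \<alpha>) Sq \<alpha> (Sq \<alpha>))"
    unfolding Sq_eq[of \<alpha>] stepF_def[of Sq \<alpha>] using someI_ex[OF ex] .
  then show "valid Sq \<alpha> (Sq \<alpha>)" "(\<exists>s'. valid Sq \<alpha> s' \<and> good (tau \<alpha>) Sq \<alpha> s') \<Longrightarrow> good (tau \<alpha>) Sq \<alpha> (Sq \<alpha>)"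
    by blast+
qed



definition Pall :: "pt set" where "Pall = (\<Union>\<alpha>. pts (Sq \<alpha>))"
definition Dom :: "real set" where "Dom = fst ` Pall"
definition f0 :: "real \<Rightarrow> real" where "f0 x = (THE y. (x,y) \<in> Pall)"
definition zs :: "real \<Rightarrow> real" where "zs \<alpha> = snd (Sq \<alpha>)"
definition fam :: "real set \<Rightarrow> real \<Rightarrow> real" where
  "fam X x = (if x \<in> Dom then f0 x else if x \<in> zs ` X then 1 else 0)"

lemma total_RR: "\<alpha> \<noteq> \<beta> \<Longrightarrow> \<alpha> \<in> underS RR \<beta> \<or> \<beta> \<in> underS RR \<alpha>"
proof -
  assume ne: "\<alpha> \<noteq> \<beta>"
  have "total_on UNIV RR"
    using card_of_Well_order[of "UNIV::real set"]
    unfolding well_order_on_def linear_order_on_def by (simp add: Field_card_of)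
  then have "(\<alpha>,\<beta>) \<in> RR \<or> (\<beta>,\<alpha>) \<in> RR" using ne unfolding total_on_def by blast
  then show ?thesis using ne by (auto simp: underS_def)
qed

lemma used_of_below:
  assumes "\<beta> \<in> underS RR \<alpha>"
  shows "p \<in> pts (Sq \<beta>) \<Longrightarrow> fst p \<in> usedS Sq \<alpha>" "zs \<beta> \<in> usedS Sq \<alpha>"
    "p \<in> pts (Sq \<beta>) \<Longrightarrow> p \<in> oldP Sq \<alpha>" "zs \<beta> \<in> oldZ Sq \<alpha>"
  using assms unfolding usedS_def oldP_def oldZ_def zs_def by auto

lemma pts_fresh: "p \<in> pts (Sq \<alpha>) \<Longrightarrow> fst p \<notin> usedS Sq \<alpha>"
  using Sq_valid[of \<alpha>] unfolding valid_def by blast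

lemma z_fresh: "zs \<alpha> \<notin> usedS Sq \<alpha>" "zs \<alpha> \<notin> fst ` pts (Sq \<alpha>)"
  using Sq_valid[of \<alpha>] unfolding valid_def zs_def by blast+

lemma pts_same:
  assumes "p \<in> pts (Sq \<alpha>)" "q \<in> pts (Sq \<alpha>)" "fst p = fst q" shows "p = q"
proof -
  have v: "fst (fst (fst (Sq \<alpha>))) = fst (snd (fst (Sq \<alpha>))) \<longrightarrow> fst (fst (Sq \<alpha>)) = snd (fst (Sq \<alpha>))"
    using Sq_valid[of \<alpha>] unfolding valid_def by blast
  show ?thesis using assms v unfolding pts_def
    by (metis (no_types, lifting) empty_iff insert_iff prod.collapse)
qed

lemma Pall_fun:
  assumes "(x,y) \<in> Pall" "(x,y') \<in> Pall" shows "y = y'"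
proof -
  obtain \<alpha> where a: "(x,y) \<in> pts (Sq \<alpha>)" using assms(1) unfolding Pall_def by blast
  obtain \<beta> where b: "(x,y') \<in> pts (Sq \<beta>)" using assms(2) unfolding Pall_def by blast
  show ?thesis
  proof (cases "\<alpha> = \<beta>")
    case True then show ?thesis using pts_same[of "(x,y)" \<alpha> "(x,y')"] a b by simp
  next
    case False
    then consider "\<alpha> \<in> underS RR \<beta>" | "\<beta> \<in> underS RR \<alpha>" using total_RR by blast
    then show ?thesis
    proof cases
      case 1 then have "fst (x,y) \<in> usedS Sq \<beta>" using used_of_below(1) a by blast
      then show ?thesis using pts_fresh[OF b] by simp
    next
      case 2 then have "fst (x,y') \<in> usedS Sq \<alpha>" using used_of_below(1) b by blast
      then show ?thesis using pts_fresh[OF a] by simp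
    qed
  qed
qed

lemma f0_val: "(x,y) \<in> Pall \<Longrightarrow> f0 x = y"
  unfolding f0_def using Pall_fun by (intro the_equality) auto

lemma zs_notin_Dom: "zs \<alpha> \<notin> Dom"
proof
  assume "zs \<alpha> \<in> Dom"
  then obtain p where p0: "p \<in> Pall" "zs \<alpha> = fst p" unfolding Dom_def by (rule imageE)
  then obtain \<beta> where p1: "p \<in> pts (Sq \<beta>)" unfolding Pall_def by blast
  have p: "p \<in> pts (Sq \<beta>)" "fst p = zs \<alpha>" using p0 p1 by auto
  show False
  proof (cases "\<alpha> = \<beta>")
    case True then show ?thesis using z_fresh(2)[of \<alpha>] p by force
  next
    case False
    then consider "\<alpha> \<in> underS RR \<beta>" | "\<beta> \<in> underS RR \<alpha>" using total_RR by blast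
    then show ?thesis
    proof cases
      case 1 then show ?thesis using used_of_below(2)[OF 1] pts_fresh[OF p(1)] p(2) by simp
    next
      case 2 then show ?thesis using used_of_below(1)[OF 2 p(1)] z_fresh(1)[of \<alpha>] p(2) by simp
    qed
  qed
qed

lemma zs_inj: "inj zs"
proof (rule injI)
  fix \<alpha> \<beta> assume eq: "zs \<alpha> = zs \<beta>"
  show "\<alpha> = \<beta>"
  proof (rule ccontr)
    assume "\<alpha> \<noteq> \<beta>"
    then consider "\<alpha> \<in> underS RR \<beta>" | "\<beta> \<in> underS RR \<alpha>" using total_RR by blast
    then show False
    proof cases
      case 1 then show ?thesis using used_of_below(2)[OF 1] z_fresh(1)[of \<beta>] eq by simp
    next
      case 2 then show ?thesis using used_of_below(2)[OF 2] z_fresh(1)[of \<alpha>] eq by simp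
    qed
  qed
qed

lemma fam_pts: "p \<in> pts (Sq \<alpha>) \<Longrightarrow> p \<in> graph_of (fam X)"
proof -
  assume p: "p \<in> pts (Sq \<alpha>)"
  then have P: "(fst p, snd p) \<in> Pall" unfolding Pall_def by auto
  then have "fst p \<in> Dom" unfolding Dom_def by force
  then have "fam X (fst p) = snd p" using f0_val[OF P] by (simp add: fam_def)
  then show ?thesis by (metis graph_of_iff prod.collapse)
qed

lemma fam_zs: "fam X (zs \<alpha>) = (if \<alpha> \<in> X then 1 else 0)"
  using zs_notin_Dom[of \<alpha>] zs_inj by (auto simp: fam_def inj_eq)

lemma fam_inj: "inj fam"
proof (rule injI)
  fix X Y assume eq: "fam X = fam Y"
  show "X = Y"
  proof (rule ccontr)
    assume "X \<noteq> Y"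
    then obtain \<alpha> where "\<alpha> \<in> X \<and> \<alpha> \<notin> Y \<or> \<alpha> \<in> Y \<and> \<alpha> \<notin> X" by blast
    then show False using fun_cong[OF eq, of "zs \<alpha>"] by (auto simp: fam_zs)
  qed
qed

lemma fam_allowed:
  assumes u: "u \<in> fst ` (oldP Sq \<alpha> \<union> pts (Sq \<alpha>)) \<union> oldZ Sq \<alpha>"
  shows "(u, fam Y u) \<in> oldP Sq \<alpha> \<union> pts (Sq \<alpha>) \<union> oldZ Sq \<alpha> \<times> {0,1}"
proof (cases "u \<in> oldZ Sq \<alpha>")
  case True
  then obtain \<beta> where "u = zs \<beta>" unfolding oldZ_def zs_def by blast
  then have "fam Y u \<in> {0,1}" using fam_zs by simp
  then show ?thesis using True by blast
next
  case False
  then obtain p where p: "p \<in> oldP Sq \<alpha> \<union> pts (Sq \<alpha>)" "fst p = u" using u by blast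
  have "p \<in> Pall" using p(1) unfolding oldP_def Pall_def by blast
  then have P: "(u, snd p) \<in> Pall" using p(2) by (metis prod.collapse)
  then have "u \<in> Dom" unfolding Dom_def by force
  then have "fam Y u = snd p" using f0_val[OF P] by (simp add: fam_def)
  then have "(u, fam Y u) = p" using p(2) by (metis prod.collapse)
  then show ?thesis using p(1) by blast
qed

lemma fam_jones: "jones (graph_of (fam X))"
  unfolding jones_def
proof (intro allI impI notI)
  fix K a b
  assume H: "closed K \<and> K \<inter> graph_of (fam X) = {} \<and> a < b" and sub: "{a<..<b} \<subseteq> fst ` K"
  obtain \<alpha> where ta: "tau \<alpha> = Inl K" using tau_Inl H by blast
  obtain x where x: "a < x" "x < b" "x \<notin> usedS Sq \<alpha>" using exists_notin H small_usedS by blast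
  then obtain y where y: "(x,y) \<in> K" using sub by force
  obtain z where z: "z \<notin> usedS Sq \<alpha> \<union> {x}"
    using exists_fresh2 small_usedS small_finite small_Un by (metis finite.emptyI finite_insert)
  have "valid Sq \<alpha> (((x,y),(x,y)),z)" using x z by (simp add: valid_def pts_def)
  moreover have "good (tau \<alpha>) Sq \<alpha> (((x,y),(x,y)),z)" using y ta by (auto simp: good_def pts_def)
  ultimately have "good (tau \<alpha>) Sq \<alpha> (Sq \<alpha>)" using Sq_good by blast
  then obtain p where "p \<in> pts (Sq \<alpha>)" "p \<in> K" using ta by (auto simp: good_def)
  then show False using fam_pts H by blast
qed



lemma kill_exists:
  fixes g h :: "pt \<Rightarrow> pt" and \<U> :: "pt set set"
  assumes J: "jones G" and cU: "countable \<U>" and oU: "\<And>U. U \<in> \<U> \<Longrightarrow> open U"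
    and GA: "G \<subseteq> \<Inter>\<U>" and contg: "continuous_on (\<Inter>\<U>) g"
    and p0: "p0 \<in> G" "g p0 \<noteq> p0" and hg: "\<And>p. p \<in> \<Inter>\<U> \<Longrightarrow> h p = g p"
  shows "\<exists>s'. valid S \<alpha> s' \<and> killed h S \<alpha> s'"
proof -
  define A where "A = \<Inter>\<U>"
  define \<delta> where "\<delta> = dist (g p0) p0"
  have \<delta>: "\<delta> > 0" using p0 by (simp add: \<delta>_def)
  have p0A: "p0 \<in> A" using p0 GA by (auto simp: A_def)
  have c: "\<forall>e>0. \<exists>d>0. \<forall>x'\<in>A. dist x' p0 < d \<longrightarrow> dist (g x') (g p0) < e"
    using contg p0A unfolding continuous_on_iff A_def by (rule bspec)
  have d2: "\<delta>/2 > 0" using \<delta> by simp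
  obtain \<eta> where \<eta>0: "\<eta> > 0" and \<eta>1: "\<forall>x'\<in>A. dist x' p0 < \<eta> \<longrightarrow> dist (g x') (g p0) < \<delta>/2"
    using c[rule_format, OF d2] by blast
  have \<eta>: "\<eta> > 0" "\<And>p. p \<in> A \<Longrightarrow> dist p p0 < \<eta> \<Longrightarrow> dist (g p) (g p0) < \<delta>/2"
    using \<eta>0 \<eta>1 by auto
  define \<eta>' where "\<eta>' = min \<eta> (\<delta>/2)"
  have \<eta>': "\<eta>' > 0" using \<eta> \<delta> by (simp add: \<eta>'_def)
  have nonfix: "g p \<noteq> p" if p: "p \<in> A" "dist p p0 < \<eta>'" for p
  proof
    assume gp: "g p = p"
    have "dist (g p0) p0 \<le> dist (g p0) (g p) + dist (g p) p0" by (rule dist_triangle)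
    also have "\<dots> = dist (g p) (g p0) + dist p p0" using gp by (simp add: dist_commute)
    also have "\<dots> < \<delta>/2 + \<delta>/2"
    proof -
      have "dist p p0 < \<eta>" "dist p p0 < \<delta>/2" using p(2) by (auto simp: \<eta>'_def)
      then show ?thesis using \<eta>(2)[OF p(1)] by linarith
    qed
    finally show False by (simp add: \<delta>_def)
  qed
  obtain x0 y0 where p0eq: "p0 = (x0, y0)" by fastforce
  define a where "a = x0 - \<eta>'/2"
  define b where "b = x0 + \<eta>'/2"
  have ab: "a < b" using \<eta>' by (simp add: a_def b_def)
  have near: "dist (x, y0) p0 < \<eta>'" if "a < x" "x < b" for x
    using that \<eta>' by (simp add: p0eq dist_horiz a_def b_def abs_less_iff)
  define U where "U = usedS S \<alpha>"
  define B where "B = oldP S \<alpha> \<union> oldZ S \<alpha> \<times> {0,1}"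
  have sU: "small U" by (simp add: U_def small_usedS)
  have sB: "small B" by (simp add: B_def small_Un small_oldP small_oldZ01)
  define Xg where "Xg = {x. a < x \<and> x < b \<and> x \<notin> U \<and> (x,y0) \<in> A}"
  have fresh: "\<exists>z. z \<notin> U \<union> F" if "finite F" for F
    using exists_fresh2[OF small_Un[OF sU small_finite[OF that]]] .
  show ?thesis
  proof (cases "\<exists>x1\<in>Xg. \<exists>x2\<in>Xg. x1 \<noteq> x2 \<and> h (x1,y0) = h (x2,y0)")
    case True
    then obtain x1 x2 where x12: "x1 \<in> Xg" "x2 \<in> Xg" "x1 \<noteq> x2" "h (x1,y0) = h (x2,y0)" by blast
    obtain z where z: "z \<notin> U \<union> {x1,x2}" using fresh[of "{x1,x2}"] by auto
    have x12U: "x1 \<notin> U" "x2 \<notin> U" using x12(1,2) by (auto simp: Xg_def)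
    let ?s = "(((x1,y0),(x2,y0)),z)"
    have "valid S \<alpha> ?s" using x12(3) x12U z unfolding valid_def pts_def U_def by auto
    moreover have "killed h S \<alpha> ?s" unfolding killed_def pts_def using x12 by auto
    ultimately show ?thesis by blast
  next
    case False
    then have inj: "inj_on (\<lambda>x. h (x,y0)) Xg" by (auto simp: inj_on_def)
    define Bad where "Bad = {x\<in>Xg. h (x,y0) \<in> B}"
    have "small Bad"
      by (rule small_inj[OF inj_on_subset[OF inj] _ sB]) (auto simp: Bad_def)
    then have sUB: "small (U \<union> Bad)" using sU by (simp add: small_Un)
    have cd: "y0 - \<eta>'/2 < y0 + \<eta>'/2" using \<eta>' by simp
    from many_lines[OF J cU oU GA ab cd sUB] obtain x where
      xx: "a < x \<and> x < b \<and> x \<notin> U \<union> Bad \<and> (\<forall>y. y0 - \<eta>'/2 < y \<and> y < y0 + \<eta>'/2 \<longrightarrow> (x,y) \<in> \<Inter>\<U>)" ..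
    have x: "a < x" "x < b" "x \<notin> U \<union> Bad" using xx by auto
    have xl: "\<forall>y. y0 - \<eta>'/2 < y \<and> y < y0 + \<eta>'/2 \<longrightarrow> (x,y) \<in> \<Inter>\<U>" using xx by blast
    have xA: "(x,y0) \<in> A" using xl \<eta>' by (simp add: A_def)
    have xX: "x \<in> Xg" using x xA by (simp add: Xg_def)
    have hB: "h (x,y0) \<notin> B" using x xX by (simp add: Bad_def)
    have hg': "h (x,y0) = g (x,y0)" using xA hg by (simp add: A_def)
    have hne: "h (x,y0) \<noteq> (x,y0)" using nonfix[OF xA near[OF x(1,2)]] hg' by simp
    obtain u v where huv: "h (x,y0) = (u,v)" by fastforce
    have notB: "(u,v) \<notin> oldP S \<alpha> \<union> oldZ S \<alpha> \<times> {0,1}" using hB huv by (simp add: B_def)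
    show ?thesis
    proof (cases "u \<notin> U \<and> u \<noteq> x")
      case True
      obtain z where z: "z \<notin> U \<union> {x,u}" using fresh[of "{x,u}"] by auto
      let ?s = "(((x,y0),(u,v+1)),z)"
      have "valid S \<alpha> ?s" using True x z unfolding valid_def pts_def U_def by auto
      moreover have "killed h S \<alpha> ?s"
        unfolding killed_def
      proof (intro disjI2 bexI[of _ "(x,y0)"] conjI)
        show "fst (h (x, y0)) \<in> fst ` (oldP S \<alpha> \<union> pts ?s) \<union> oldZ S \<alpha>"
          using huv by (force simp: pts_def)
        show "h (x, y0) \<notin> oldP S \<alpha> \<union> pts ?s \<union> oldZ S \<alpha> \<times> {0, 1}"
          using huv notB hne by (auto simp: pts_def)
      qed (simp add: pts_def)
      ultimately show ?thesis by blast
    next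
      case False
      obtain z where z: "z \<notin> U \<union> {x}" using fresh[of "{x}"] by auto
      let ?s = "(((x,y0),(x,y0)),z)"
      have "valid S \<alpha> ?s" using x z unfolding valid_def pts_def U_def by auto
      moreover have "killed h S \<alpha> ?s"
        unfolding killed_def
      proof (intro disjI2 bexI[of _ "(x,y0)"] conjI)
        have "u = x \<or> u \<in> U" using False by blast
        then show "fst (h (x, y0)) \<in> fst ` (oldP S \<alpha> \<union> pts ?s) \<union> oldZ S \<alpha>"
          using huv usedS_eq[of S \<alpha>] by (auto simp: pts_def U_def)
        show "h (x, y0) \<notin> oldP S \<alpha> \<union> pts ?s \<union> oldZ S \<alpha> \<times> {0, 1}"
          using huv notB hne by (auto simp: pts_def)
      qed (simp add: pts_def)
      ultimately show ?thesis by blast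
    qed
  qed
qed

lemma graph_closure_unique:
  fixes g :: "pt \<Rightarrow> pt"
  assumes contg: "continuous_on A g" and p: "p \<in> A"
    and pq: "(p,q) \<in> closure ((\<lambda>p. (p, g p)) ` A)"
  shows "q = g p"
proof (rule ccontr)
  assume ne: "q \<noteq> g p"
  define \<epsilon> where "\<epsilon> = dist q (g p)"
  have \<epsilon>: "\<epsilon> > 0" using ne by (simp add: \<epsilon>_def)
  obtain d where d: "d > 0" "\<And>x'. x' \<in> A \<Longrightarrow> dist x' p < d \<Longrightarrow> dist (g x') (g p) < \<epsilon>/2"
    using contg p \<epsilon> unfolding continuous_on_iff by (meson half_gt_zero)
  define e where "e = min d (\<epsilon>/2)"
  have e: "e > 0" using d \<epsilon> by (simp add: e_def)
  obtain y where y: "y \<in> (\<lambda>p. (p, g p)) ` A" "dist y (p,q) < e"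
    using pq e unfolding closure_approachable by blast
  then obtain x' where x': "x' \<in> A" "y = (x', g x')" by blast
  have "dist x' p \<le> dist y (p,q)" using dist_fst_le[of y "(p,q)"] x' by simp
  then have "dist x' p < d" using y e_def by linarith
  then have 1: "dist (g x') (g p) < \<epsilon>/2" using d(2) x' by blast
  have "dist (g x') q \<le> dist y (p,q)" using dist_snd_le[of y "(p,q)"] x' by simp
  then have 2: "dist (g x') q < \<epsilon>/2" using y e_def by linarith
  have "\<epsilon> \<le> dist q (g x') + dist (g x') (g p)" unfolding \<epsilon>_def by (rule dist_triangle)
  then show False using 1 2 by (simp add: dist_commute)
qed

lemma decodeH_eq:
  fixes g :: "pt \<Rightarrow> pt"
  assumes contg: "continuous_on A g" and p: "p \<in> A"
  shows "decodeH (closure ((\<lambda>p. (p, g p)) ` A)) p = g p"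
proof -
  have "(p, g p) \<in> (\<lambda>p. (p, g p)) ` A" using p by (rule imageI)
  then have "(p, g p) \<in> closure ((\<lambda>p. (p, g p)) ` A)" using closure_subset by (rule subsetD[rotated])
  then have "(p, decodeH (closure ((\<lambda>p. (p, g p)) ` A)) p) \<in> closure ((\<lambda>p. (p, g p)) ` A)"
    unfolding decodeH_def by (rule someI)
  then show ?thesis by (rule graph_closure_unique[OF contg p])
qed



lemma rigid:
  assumes S: "S \<subseteq> graph_of (fam Y)" and hom: "graph_of (fam X) homeomorphic S"
  shows "fam X = fam Y \<and> S = graph_of (fam Y)"
proof -
  let ?G = "graph_of (fam X)"
  from hom obtain \<phi> \<psi> where hm: "homeomorphism ?G S \<phi> \<psi>" unfolding homeomorphic_def by blast
  have \<phi>c: "continuous_on ?G \<phi>" and \<phi>S: "\<phi> ` ?G = S" and \<psi>\<phi>: "\<And>p. p \<in> ?G \<Longrightarrow> \<psi> (\<phi> p) = p"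
    using hm unfolding homeomorphism_def by auto
  show ?thesis
  proof (cases "\<forall>p\<in>?G. \<phi> p = p")
    case True
    have "\<phi> ` ?G = id ` ?G" by (rule image_cong) (simp_all add: True)
    then have SG: "S = ?G" using \<phi>S by simp
    then have sub: "?G \<subseteq> graph_of (fam Y)" using S by simp
    have "fam X = fam Y"
    proof
      fix x
      have "(x, fam X x) \<in> ?G" by (simp add: graph_of_iff)
      then have "(x, fam X x) \<in> graph_of (fam Y)" using sub by (rule subsetD[rotated])
      then show "fam X x = fam Y x" by (simp add: graph_of_iff)
    qed
    then show ?thesis using SG by simp
  next
    case False
    then obtain p0 where p0: "p0 \<in> ?G" "\<phi> p0 \<noteq> p0" by blast
    have cm: "continuous_map (subtopology euclidean ?G) euclidean \<phi>"
      using \<phi>c by (simp add: continuous_map_iff_continuous)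
    have mz: "metrizable_space (euclidean :: pt topology)" by (rule metrizable_space_euclidean)
    obtain A g where gA: "gdelta_in euclidean A" "?G \<subseteq> A"
      "continuous_map (subtopology euclidean A) euclidean g" "\<And>x. x \<in> ?G \<Longrightarrow> g x = \<phi> x"
    proof (rule Lavrentiev_extension[of ?G euclidean euclidean \<phi>])
      show "?G \<subseteq> topspace euclidean" by simp
      show "metrizable_space (euclidean :: pt topology) \<or> topspace euclidean \<subseteq> euclidean closure_of ?G"
        using mz by blast
      show "completely_metrizable_space (euclidean :: pt topology)" by (rule completely_metrizable_space_euclidean)
      show "continuous_map (subtopology euclidean ?G) euclidean \<phi>" by (rule cm)
    qed (blast)
    have contg: "continuous_on A g" using gA(3) by (simp add: continuous_map_iff_continuous)
    have "(countable intersection_of openin euclidean) A" using gA(1) by (simp add: gdelta_in_alt)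
    then obtain \<U> where cU: "countable \<U>" and oU0: "\<U> \<subseteq> Collect (openin euclidean)" and AU: "\<Inter>\<U> = A"
      unfolding intersection_of_def by blast
    have oU: "\<And>U. U \<in> \<U> \<Longrightarrow> open U" using oU0 by auto
    define \<Gamma> where "\<Gamma> = closure ((\<lambda>p. (p, g p)) ` A)"
    have "closed \<Gamma>" by (simp add: \<Gamma>_def)
    then obtain \<alpha> where ta: "tau \<alpha> = Inr \<Gamma>" using tau_Inr by blast
    have hA: "\<And>p. p \<in> \<Inter>\<U> \<Longrightarrow> decodeH \<Gamma> p = g p"
      unfolding \<Gamma>_def using decodeH_eq[OF contg] AU by simp
    have GU: "?G \<subseteq> \<Inter>\<U>" using gA(2) AU by simp
    have contg': "continuous_on (\<Inter>\<U>) g" using contg AU by simp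
    have gp0: "g p0 \<noteq> p0" using p0 gA(4) by simp
    have "\<exists>s'. valid Sq \<alpha> s' \<and> killed (decodeH \<Gamma>) Sq \<alpha> s'"
      by (rule kill_exists[OF fam_jones cU oU GU contg' p0(1) gp0 hA])
    then have "\<exists>s'. valid Sq \<alpha> s' \<and> good (tau \<alpha>) Sq \<alpha> s'" using ta by (simp add: good_def)
    then have "good (tau \<alpha>) Sq \<alpha> (Sq \<alpha>)" by (rule Sq_good)
    then have K: "killed (decodeH \<Gamma>) Sq \<alpha> (Sq \<alpha>)" using ta by (simp add: good_def)
    have hG: "decodeH \<Gamma> p = \<phi> p" if "p \<in> ?G" for p
      using hA[of p] gA(4)[OF that] GU that by auto
    have ptsG: "p \<in> ?G" if "p \<in> pts (Sq \<alpha>)" for p using fam_pts[OF that] .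
    show ?thesis
    proof (rule ccontr)
      from K show False unfolding killed_def
      proof (elim disjE bexE conjE)
        fix p q assume p: "p \<in> pts (Sq \<alpha>)" and q: "q \<in> pts (Sq \<alpha>)" and ne: "fst p \<noteq> fst q"
          and eq: "decodeH \<Gamma> p = decodeH \<Gamma> q"
        have "\<phi> p = \<phi> q" using eq hG[OF ptsG[OF p]] hG[OF ptsG[OF q]] by simp
        then have "p = q" using \<psi>\<phi>[OF ptsG[OF p]] \<psi>\<phi>[OF ptsG[OF q]] by metis
        then show False using ne by simp
      next
        fix p assume p: "p \<in> pts (Sq \<alpha>)"
          and u: "fst (decodeH \<Gamma> p) \<in> fst ` (oldP Sq \<alpha> \<union> pts (Sq \<alpha>)) \<union> oldZ Sq \<alpha>"
          and nin: "decodeH \<Gamma> p \<notin> oldP Sq \<alpha> \<union> pts (Sq \<alpha>) \<union> oldZ Sq \<alpha> \<times> {0, 1}"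
        have "decodeH \<Gamma> p = \<phi> p" by (rule hG[OF ptsG[OF p]])
        moreover have "\<phi> p \<in> S" using \<phi>S ptsG[OF p] by blast
        ultimately have "decodeH \<Gamma> p \<in> graph_of (fam Y)" using S by auto
        then have "decodeH \<Gamma> p = (fst (decodeH \<Gamma> p), fam Y (fst (decodeH \<Gamma> p)))"
          by (metis graph_of_iff prod.collapse)
        then show False using fam_allowed[OF u, of Y] nin by simp
      qed
    qed
  qed
qed

theorem theorem1:
  shows "\<exists>\<F> :: (real \<Rightarrow> real) set.
           \<F> \<approx> (UNIV :: real set set) \<and>
           (\<forall>f\<in>\<F>. connected (graph_of f) \<and> closure (graph_of f) = UNIV) \<and>
           incomparable_graphs \<F>"
proof (intro exI[of _ "range fam"] conjI)
  have "bij_betw fam UNIV (range fam)" using fam_inj by (simp add: bij_betw_def)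
  then have "(UNIV::real set set) \<approx> range fam" unfolding eqpoll_def by blast
  then show "range fam \<approx> (UNIV :: real set set)" by (rule eqpoll_sym)
  show "\<forall>f\<in>range fam. connected (graph_of f) \<and> closure (graph_of f) = UNIV"
    using fam_jones jones_connected jones_dense by blast
  show "incomparable_graphs (range fam)"
    unfolding incomparable_graphs_def
  proof (intro ballI allI impI)
    fix f g S assume f: "f \<in> range fam" and g: "g \<in> range fam"
      and H: "S \<subseteq> graph_of g \<and> graph_of f homeomorphic S"
    obtain X where X: "f = fam X" using f by blast
    obtain Y where Y: "g = fam Y" using g by blast
    show "f = g \<and> S = graph_of g" using rigid[of S Y X] H X Y by simp
  qed
qed



end
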